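(* Let $H=F[1/t]\subseteq\mathbb{Q}[t,1/t]$. Then $H$ equals the set of all $f(t)\in\mathbb{Q}[t,1/t]$ such that $f(a)\in\mathbb{Z}[1/a]$ for every positive integer $a$.
   Context: $F\subseteq\mathbb{Q}[t]$ is the ring of numerical polynomials, i.e. polynomials $f(t)\in\mathbb{Q}[t]$ with $f(n)\in\mathbb{Z}$ for all integers $n\gg0$; it is free abelian with basis $\alpha_n=\binom tn$, $n\ge0$. $H=F[1/t]$ is the localization of $F$ at $t$, viewed as a subring of $\mathbb{Q}[t,1/t]$. *)

theory Defs
  imports "HOL-Computational_Algebra.Polynomial"
begin

definition numerical_poly :: "rat poly \<Rightarrow> bool" where
  "numerical_poly f \<longleftrightarrow> (\<exists>N::int. \<forall>n::int. n \<ge> N \<longrightarrow> poly f (of_int n) \<in> \<int>)"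

text \<open>An element of Q[t,1/t] is represented as p(t)/t^k with p in Q[t], k in N.
  Two representatives (p,k), (q,m) are equal in Q[t,1/t] iff p * t^m = q * t^k.\<close>
definition laurent_eq :: "rat poly \<Rightarrow> nat \<Rightarrow> rat poly \<Rightarrow> nat \<Rightarrow> bool" where
  "laurent_eq p k q m \<longleftrightarrow> p * monom 1 m = q * monom 1 k"

definition in_H :: "rat poly \<Rightarrow> nat \<Rightarrow> bool" where
  "in_H p k \<longleftrightarrow> (\<exists>f m. numerical_poly f \<and> laurent_eq p k f m)"

definition laurent_eval :: "rat poly \<Rightarrow> nat \<Rightarrow> rat \<Rightarrow> rat" where
  "laurent_eval p k a = poly p a / a ^ k"

definition Z_inv :: "int \<Rightarrow> rat set" where
  "Z_inv a = {x. \<exists>(z::int) (n::nat). x = of_int z / of_int a ^ n}"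

end

theory Submission imports Defs "HOL-Computational_Algebra.Primes" begin

lemma dvd_pow_self:
  fixes a :: int
  shows "\<forall>y::int. nat y = m \<longrightarrow> y > 0 \<longrightarrow> y dvd a ^ n \<longrightarrow> y dvd a ^ nat y"
proof (induction m rule: less_induct)
  case (less m)
  show ?case
  proof (intro allI impI)
    fix y :: int assume ym: "nat y = m" and yp: "y > 0" and yd: "y dvd a ^ n"
    show "y dvd a ^ nat y"
    proof (cases "y = 1")
      case True then show ?thesis by simp
    next
      case False
      then have "\<not> is_unit y" using yp by simp
      then obtain q where q: "q dvd y" "prime q" using prime_divisor_exists[of y] yp by auto
      then have qa: "q dvd a" using yd prime_dvd_power dvd_trans by blast
      obtain y' where y': "y = q * y'" using q by (auto elim: dvdE)
      have q1: "q > 1" using q(2) prime_gt_1_int by blast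
      have y'p: "y' > 0" using yp y' q1 by (simp add: zero_less_mult_iff)
      have "1 * y' < q * y'" using q1 y'p by (intro mult_strict_right_mono) auto
      then have "y' < y" using y' by simp
      then have lt: "nat y' < m" using ym y'p by simp
      have "y' dvd a ^ n" using yd y' by (metis dvd_mult_right)
      then have IH: "y' dvd a ^ nat y'" using less lt y'p by blast
      have "y dvd a * a ^ nat y'" using y' IH qa by (simp add: mult_dvd_mono)
      also have "a * a ^ nat y' = a ^ (nat y' + 1)" by simp
      also have "\<dots> dvd a ^ nat y" using lt ym by (intro le_imp_power_dvd) simp
      finally show ?thesis .
    qed
  qed
qed

lemma intval_all:
  shows "\<forall>f::rat poly. degree f = d \<longrightarrow> (\<forall>n::int. n \<ge> N \<longrightarrow> poly f (of_int n) \<in> \<int>) \<longrightarrow> (\<forall>n::int. poly f (of_int n) \<in> \<int>)"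
proof (induction d rule: less_induct)
  case (less d)
  show ?case
  proof (intro allI impI)
    fix f :: "rat poly" and n :: int
    assume df: "degree f = d" and iv: "\<forall>n::int. n \<ge> N \<longrightarrow> poly f (of_int n) \<in> \<int>"
    show "poly f (of_int n) \<in> \<int>"
    proof (cases "d = 0")
      case True
      then obtain c where "f = [:c:]" using df degree_eq_zeroE by blast
      then show ?thesis using iv[rule_format, of N] by simp
    next
      case False
      define g where "g = pcompose f [:1,1:] - f"
      have pg: "poly g x = poly f (x + 1) - poly f x" for x
        unfolding g_def by (simp add: poly_pcompose algebra_simps)
      have d1: "degree (pcompose f [:1,1:]) = d" using df by (simp add: degree_pcompose)
      have lc: "coeff (pcompose f [:1,1:]) d = coeff f d"
        using lead_coeff_comp[of "[:1::rat,1:]" f] d1 df by simp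
      have dg: "degree g \<le> d" unfolding g_def using d1 df
        by (intro degree_diff_le) simp_all
      have cg: "coeff g d = 0" unfolding g_def using lc by simp
      have dlt: "degree g < d"
      proof (rule ccontr)
        assume "\<not> degree g < d"
        then have "degree g = d" using dg by simp
        then have "g \<noteq> 0" using False by auto
        then show False using cg \<open>degree g = d\<close> by (metis leading_coeff_0_iff)
      qed
      have ivg: "\<forall>n::int. n \<ge> N \<longrightarrow> poly g (of_int n) \<in> \<int>"
        using iv pg by (metis Ints_diff add.commute of_int_1 of_int_add add_increasing2 zero_le_one)
      have gall: "\<forall>n::int. poly g (of_int n) \<in> \<int>"
        using less[OF dlt, rule_format, OF refl] ivg by simp
      have down: "poly f (of_int (N - int j)) \<in> \<int>" for j :: nat
      proof (induction j)
        case 0 then show ?case using iv by simp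
      next
        case (Suc j)
        have "poly f (of_int (N - int (Suc j))) = poly f (of_int (N - int (Suc j)) + 1) - poly g (of_int (N - int (Suc j)))"
          using pg by simp
        also have "of_int (N - int (Suc j)) + 1 = (of_int (N - int j) :: rat)" by simp
        finally show ?case using Suc gall by (metis Ints_diff)
      qed
      show ?thesis
      proof (cases "n \<ge> N")
        case True then show ?thesis using iv by simp
      next
        case False
        then have "n = N - int (nat (N - n))" by simp
        then show ?thesis using down by metis
      qed
    qed
  qed
qed

lemma rat_int_dvd:
  fixes x y c :: int
  assumes "y > 0" "coprime x y" "of_int c * (of_int x / of_int y :: rat) \<in> \<int>"
  shows "y dvd c"
proof -
  obtain w where w: "of_int c * (of_int x / of_int y :: rat) = of_int w" using assms(3) Ints_cases by blast
  then have "(of_int (c * x) :: rat) = of_int (w * y)" using assms(1) by (simp add: field_simps)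
  then have "c * x = w * y" by (simp only: of_int_eq_iff)
  then have "y dvd c * x" by simp
  then show ?thesis using assms(2) by (simp add: coprime_commute coprime_dvd_mult_left_iff)
qed

lemma denom_mult_int:
  fixes r :: rat
  shows "of_int (snd (quotient_of r)) * r \<in> \<int>"
proof -
  obtain n d where nd: "quotient_of r = (n, d)" by (cases "quotient_of r")
  have "r = of_int n / of_int d" using quotient_of_div[OF nd] .
  moreover have "d > 0" using quotient_of_denom_pos[OF nd] .
  ultimately show ?thesis using nd by simp
qed

lemma common_denom:
  fixes p :: "rat poly"
  obtains D :: int where "D > 0" "\<And>a::int. of_int D * poly p (of_int a) \<in> \<int>"
proof -
  define D where "D = (\<Prod>i\<le>degree p. snd (quotient_of (coeff p i)))"
  have Dp: "D > 0" unfolding D_def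
    by (intro prod_pos) (metis prod.collapse quotient_of_denom_pos)
  have Dc: "of_int D * coeff p i \<in> \<int>" if "i \<le> degree p" for i
  proof -
    have "D = snd (quotient_of (coeff p i)) * (\<Prod>j\<in>{..degree p} - {i}. snd (quotient_of (coeff p j)))"
      unfolding D_def using that by (subst prod.remove[of _ i]) auto
    then have "of_int D * coeff p i = (of_int (snd (quotient_of (coeff p i))) * coeff p i) * of_int (\<Prod>j\<in>{..degree p} - {i}. snd (quotient_of (coeff p j)))"
      by (simp add: algebra_simps)
    then show ?thesis using denom_mult_int by (metis Ints_mult Ints_of_int)
  qed
  have "of_int D * poly p (of_int a) \<in> \<int>" for a :: int
  proof -
    have "of_int D * poly p (of_int a) = (\<Sum>i\<le>degree p. (of_int D * coeff p i) * of_int a ^ i)"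
      by (simp add: poly_altdef sum_distrib_left algebra_simps)
    also have "\<dots> \<in> \<int>" by (auto intro!: Ints_sum Ints_mult[OF Dc] Ints_power)
    finally show ?thesis .
  qed
  then show ?thesis using that Dp by blast
qed

theorem lemma1p2:
  fixes p :: "rat poly" and k :: nat
  shows "in_H p k \<longleftrightarrow> (\<forall>a::int. a > 0 \<longrightarrow> laurent_eval p k (of_int a) \<in> Z_inv a)"
proof
  assume "in_H p k"
  then obtain f m where nf: "numerical_poly f" and eq: "p * monom 1 m = f * monom 1 k"
    unfolding in_H_def laurent_eq_def by blast
  obtain N where iv: "\<forall>n::int. n \<ge> N \<longrightarrow> poly f (of_int n) \<in> \<int>" using nf unfolding numerical_poly_def by blast
  have allz: "\<forall>n::int. poly f (of_int n) \<in> \<int>" using intval_all iv by blast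
  show "\<forall>a::int. a > 0 \<longrightarrow> laurent_eval p k (of_int a) \<in> Z_inv a"
  proof (intro allI impI)
    fix a :: int assume ap: "a > 0"
    obtain z where z: "poly f (of_int a) = of_int z" using allz Ints_cases by metis
    have "poly (p * monom 1 m) (of_int a) = poly (f * monom 1 k) (of_int a)" using eq by simp
    then have e: "poly p (of_int a) * of_int a ^ m = of_int z * (of_int a :: rat) ^ k"
      using z by (simp add: poly_monom)
    have "laurent_eval p k (of_int a) = of_int z / of_int a ^ m"
      unfolding laurent_eval_def using e ap by (simp add: field_simps)
    then show "laurent_eval p k (of_int a) \<in> Z_inv a" unfolding Z_inv_def by blast
  qed
next
  assume H: "\<forall>a::int. a > 0 \<longrightarrow> laurent_eval p k (of_int a) \<in> Z_inv a"
  obtain D :: int where Dp: "D > 0" and Dint: "\<And>a::int. of_int D * poly p (of_int a) \<in> \<int>"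
    using common_denom by blast
  define M where "M = nat D"
  have key: "poly p (of_int a) * of_int a ^ M \<in> \<int>" if ap: "a > 0" for a :: int
  proof -
    obtain z n where zn: "laurent_eval p k (of_int a) = of_int z / of_int a ^ n"
      using H ap unfolding Z_inv_def by blast
    define r where "r = poly p (of_int a)"
    have rn: "of_int (a ^ n) * r = of_int (z * a ^ k)"
      using zn ap unfolding laurent_eval_def r_def by (simp add: field_simps)
    obtain x y where xy: "quotient_of r = (x, y)" by (cases "quotient_of r")
    have r: "r = of_int x / of_int y" using quotient_of_div[OF xy] .
    have yp: "y > 0" using quotient_of_denom_pos[OF xy] .
    have cop: "coprime x y" using quotient_of_coprime[OF xy] .
    have "y dvd D" using rat_int_dvd[OF yp cop] Dint[of a] r r_def by simp
    have "y dvd a ^ n" using rat_int_dvd[OF yp cop] rn r by (metis Ints_of_int)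
    then have "y dvd a ^ nat y" using dvd_pow_self[of "nat y" a n] yp by blast
    moreover have "nat y \<le> M" unfolding M_def using zdvd_imp_le[OF \<open>y dvd D\<close> Dp] by simp
    ultimately have "y dvd a ^ M" by (meson dvd_trans le_imp_power_dvd)
    then obtain u where u: "a ^ M = y * u" by (auto elim: dvdE)
    have "r * of_int a ^ M = of_int (x * u)"
      using r u yp by (simp add: field_simps flip: of_int_power)
    then show ?thesis unfolding r_def by simp
  qed
  have "numerical_poly (p * monom 1 M)"
    unfolding numerical_poly_def
  proof (intro exI[of _ 1] allI impI)
    fix n :: int assume "n \<ge> 1"
    then show "poly (p * monom 1 M) (of_int n) \<in> \<int>" using key by (simp add: poly_monom)
  qed
  moreover have "laurent_eq p k (p * monom 1 M) (k + M)"
    unfolding laurent_eq_def by (simp add: mult_monom mult.assoc add.commute)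
  ultimately show "in_H p k" unfolding in_H_def by blast
qed

end
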